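(* Let $1\le a\le\sqrt3$, $c(a)=\frac98\left(a+\frac1a\right)$, and for $K> c(a)^2/9$ put $\alpha=\frac12\left(3-3a^2+\sqrt{9a^4-4c(a)a^3+4Ka^2}\right)$, $\beta=\frac12\left(3-3a^2-\sqrt{9a^4-4c(a)a^3+4Ka^2}\right)$, $\gamma=\sqrt{Ka^2-c(a)a+9/4}$, and $$T(K,a)=\int_\alpha^\gamma\frac{4a\,ds}{\sqrt{(s-\alpha)(s-\beta)}\sqrt{\gamma^2-s^2}}.$$ Then $\lim_{K\to\infty}T(K,a)=0$.
   Context: $T(K,a)$ is the period of the closed solutions of the Lie–Poisson equation for chains on $\mathrm{SU}(2)$ with left-invariant CR structure parameter $a$ lying on the sphere of radius $\sqrt K$; here it is given by the explicit integral above. *)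

theory Defs
  imports "HOL-Analysis.Analysis"
begin

definition cpar :: "real \<Rightarrow> real" where
  "cpar a = 9/8 * (a + 1/a)"

definition alpha :: "real \<Rightarrow> real \<Rightarrow> real" where
  "alpha K a = (3 - 3*a^2 + sqrt (9*a^4 - 4*cpar a*a^3 + 4*K*a^2)) / 2"

definition beta :: "real \<Rightarrow> real \<Rightarrow> real" where
  "beta K a = (3 - 3*a^2 - sqrt (9*a^4 - 4*cpar a*a^3 + 4*K*a^2)) / 2"

definition gamma :: "real \<Rightarrow> real \<Rightarrow> real" where
  "gamma K a = sqrt (K*a^2 - cpar a*a + 9/4)"

definition Tper :: "real \<Rightarrow> real \<Rightarrow> real" where
  "Tper K a = (LBINT s:{alpha K a..gamma K a}.
      4*a / (sqrt ((s - alpha K a) * (s - beta K a)) * sqrt ((gamma K a)^2 - s^2)))"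

end

theory Submission
  imports Defs "HOL-Real_Asymp.Real_Asymp"
begin

lemma FTC_part:
  fixes A G C :: real
  assumes AG: "A < G" and C: "0 \<le> C"
  shows "set_integrable lborel {A<..<G} (\<lambda>s. C * (1/sqrt(s-A) + 1/sqrt(G-s)))"
    and "(LBINT s:{A<..<G}. C * (1/sqrt(s-A) + 1/sqrt(G-s))) = C * (4 * sqrt (G-A))"
proof -
  let ?f = "\<lambda>s. C * (1/sqrt(s-A) + 1/sqrt(G-s))"
  let ?F = "\<lambda>s. C * (2 * sqrt(s-A) - 2 * sqrt(G-s))"
  have E: "einterval (ereal A) (ereal G) = {A<..<G}" by auto
  have D: "DERIV ?F x :> ?f x" if "A < x" "x < G" for x
    using that by (auto intro!: derivative_eq_intros simp: field_simps)
  have cont: "isCont ?f x" if "A < x" "x < G" for x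
    using that by (auto intro!: continuous_intros)
  have L: "((?F \<circ> real_of_ereal) \<longlongrightarrow> C * (- 2 * sqrt (G-A))) (at_right (ereal A))"
    unfolding ereal_tendsto_simps
    by (auto intro!: tendsto_eq_intros)
  have R: "((?F \<circ> real_of_ereal) \<longlongrightarrow> C * (2 * sqrt (G-A))) (at_left (ereal G))"
    unfolding ereal_tendsto_simps
    by (auto intro!: tendsto_eq_intros)
  have nn: "AE x in lborel. ereal A < ereal x \<longrightarrow> ereal x < ereal G \<longrightarrow> 0 \<le> ?f x"
    using C by (auto intro!: AE_I2)
  note th = interval_integral_FTC_nonneg[of "ereal A" "ereal G" ?F ?f, OF _ _ _ nn L R]
  show "set_integrable lborel {A<..<G} ?f"
    using th(1) AG D cont E by auto
  have "(LBINT x=ereal A..ereal G. ?f x) = C * (2 * sqrt (G-A)) - C * (- 2 * sqrt (G-A))"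
    using th(2) AG D cont by auto
  then show "(LBINT s:{A<..<G}. ?f s) = C * (4 * sqrt (G-A))"
    using AG by (simp add: interval_lebesgue_integral_def E algebra_simps)
qed

lemma ptwise:
  fixes a A B G s :: real
  assumes a: "0 < a" and BA: "B < A" and A0: "0 < A" and s1: "A < s" and s2: "s < G"
  shows "4*a / (sqrt ((s - A) * (s - B)) * sqrt (G^2 - s^2))
     \<le> 4*a / (sqrt ((A-B)*G) * sqrt (G-A)) * (1/sqrt(s-A) + 1/sqrt(G-s))"
proof -
  define p where "p = sqrt (s-A)"
  define q where "q = sqrt (G-s)"
  have p: "p > 0" "p^2 = s-A" using s1 by (auto simp: p_def)
  have q: "q > 0" "q^2 = G-s" using s2 by (auto simp: q_def)
  have e1: "sqrt ((s - A) * (s - B)) = p * sqrt (s-B)" by (simp add: p_def real_sqrt_mult)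
  have e2: "sqrt (G^2 - s^2) = q * sqrt (G+s)"
    by (simp add: q_def real_sqrt_mult[symmetric] power2_eq_square algebra_simps)
  have m1: "sqrt (A-B) \<le> sqrt (s-B)" using s1 by simp
  have m2: "sqrt G \<le> sqrt (G+s)" using s1 A0 by simp
  have pos: "sqrt (A-B) > 0" "sqrt G > 0" using BA A0 s1 s2 by auto
  have "sqrt (A-B) * sqrt G \<le> sqrt (s-B) * sqrt (G+s)"
    using m1 m2 pos by (intro mult_mono) auto
  hence "4*a / (sqrt ((s - A) * (s - B)) * sqrt (G^2 - s^2))
      \<le> 4*a / (p*q*(sqrt (A-B) * sqrt G))"
  proof -
    assume h: "sqrt (A-B) * sqrt G \<le> sqrt (s-B) * sqrt (G+s)"
    have "p*q*(sqrt (A-B) * sqrt G) \<le> p*q*(sqrt (s-B) * sqrt (G+s))"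
      using h p q by (intro mult_left_mono) auto
    also have "\<dots> = p * sqrt (s-B) * (q * sqrt (G+s))" by (simp add: ac_simps)
    finally have h2: "p*q*(sqrt (A-B) * sqrt G) \<le> p * sqrt (s-B) * (q * sqrt (G+s))" .
    have h3: "0 < p*q*(sqrt (A-B) * sqrt G)" using p q pos by simp
    show ?thesis unfolding e1 e2
      by (rule divide_left_mono[OF h2]) (use a h3 h2 in auto)
  qed
  also have "sqrt (G-A) \<le> p + q"
  proof -
    have "G - A = p^2 + q^2" using p q by simp
    also have "\<dots> \<le> (p+q)^2" using p q by (simp add: power2_eq_square algebra_simps)
    finally show ?thesis using p q by (metis real_le_lsqrt add_pos_pos less_imp_le)
  qed
  hence "4*a / (p*q*(sqrt (A-B) * sqrt G)) \<le> 4*a / (sqrt ((A-B)*G) * sqrt (G-A)) * (1/p + 1/q)"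
  proof -
    assume h: "sqrt (G-A) \<le> p + q"
    define X where "X = sqrt (A-B) * sqrt G"
    have sx: "sqrt ((A-B)*G) = X" by (simp add: X_def real_sqrt_mult)
    have X: "X > 0" using pos by (simp add: X_def)
    have L: "sqrt (G-A) > 0" using s1 s2 by simp
    define k where "k = 4*a / (X * sqrt (G-A) * p * q)"
    have k: "k > 0" using X L p q a by (simp add: k_def)
    have "4*a / (p*q*(sqrt (A-B) * sqrt G)) = k * sqrt (G-A)"
      using X L p q unfolding k_def X_def[symmetric] by (simp add: field_simps)
    also have "\<dots> \<le> k * (p+q)" using h k by simp
    also have "\<dots> = 4*a / (sqrt ((A-B)*G) * sqrt (G-A)) * (1/p + 1/q)"
      using X L p q sx unfolding k_def by (simp add: field_simps)
    finally show ?thesis .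
  qed
  finally show ?thesis by (simp add: p_def q_def)
qed

lemma int_bound:
  fixes a A B G :: real
  assumes a: "0 < a" and BA: "B < A" and A0: "0 < A" and G0: "0 < G"
  shows "0 \<le> (LBINT s:{A..G}. 4*a / (sqrt ((s - A) * (s - B)) * sqrt (G^2 - s^2)))"
    and "(LBINT s:{A..G}. 4*a / (sqrt ((s - A) * (s - B)) * sqrt (G^2 - s^2))) \<le> 16*a / sqrt ((A-B)*G)"
proof -
  define f where "f = (\<lambda>s. 4*a / (sqrt ((s - A) * (s - B)) * sqrt (G^2 - s^2)))"
  have fnn: "0 \<le> f s" if "A \<le> s" "s \<le> G" for s
  proof -
    have "s^2 \<le> G^2" using that A0 by (intro power_mono) auto
    thus ?thesis using that a BA unfolding f_def by (auto intro!: divide_nonneg_nonneg mult_nonneg_nonneg)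
  qed
  have eq: "(\<lambda>s. indicator {A..G} s *\<^sub>R f s) = (\<lambda>s. indicator {A<..<G} s *\<^sub>R f s)"
  proof
    fix s
    show "indicator {A..G} s *\<^sub>R f s = indicator {A<..<G} s *\<^sub>R f s"
      by (cases "s = A \<or> s = G") (auto simp: f_def indicator_def)
  qed
  have I: "(LBINT s:{A..G}. f s) = (LBINT s:{A<..<G}. f s)"
    unfolding set_lebesgue_integral_def eq ..
  show "0 \<le> (LBINT s:{A..G}. 4*a / (sqrt ((s - A) * (s - B)) * sqrt (G^2 - s^2)))"
    unfolding f_def[symmetric] I set_lebesgue_integral_def
    by (rule Bochner_Integration.integral_nonneg) (auto simp: indicator_def intro!: fnn)
  show "(LBINT s:{A..G}. 4*a / (sqrt ((s - A) * (s - B)) * sqrt (G^2 - s^2))) \<le> 16*a / sqrt ((A-B)*G)"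
  proof (cases "A < G")
    case False
    hence "{A<..<G} = {}" by auto
    hence "(LBINT s:{A..G}. f s) = 0" unfolding I by (simp add: set_lebesgue_integral_def)
    thus ?thesis unfolding f_def[symmetric] using a BA G0 by simp
  next
    case True
    define C where "C = 4*a / (sqrt ((A-B)*G) * sqrt (G-A))"
    have C: "0 \<le> C" using a BA G0 True by (simp add: C_def)
    note F = FTC_part[OF True C]
    have "(LBINT s:{A<..<G}. f s) \<le> (LBINT s:{A<..<G}. C * (1/sqrt(s-A) + 1/sqrt(G-s)))"
      unfolding set_lebesgue_integral_def
    proof (rule integral_mono')
      show "integrable lborel (\<lambda>s. indicator {A<..<G} s *\<^sub>R (C * (1/sqrt(s-A) + 1/sqrt(G-s))))"
        using F(1) unfolding set_integrable_def .
      fix s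
      show "0 \<le> indicator {A<..<G} s *\<^sub>R (C * (1/sqrt(s-A) + 1/sqrt(G-s)))"
        using C by (auto simp: indicator_def)
      show "indicator {A<..<G} s *\<^sub>R f s \<le> indicator {A<..<G} s *\<^sub>R (C * (1/sqrt(s-A) + 1/sqrt(G-s)))"
        using ptwise[OF a BA A0, of s G] by (auto simp: indicator_def f_def C_def)
    qed
    also have "\<dots> = C * (4 * sqrt (G-A))" by (rule F(2))
    also have "\<dots> = 16*a / sqrt ((A-B)*G)" using True by (simp add: C_def)
    finally show ?thesis unfolding f_def[symmetric] I .
  qed
qed


lemma asym1: assumes "0 < (a::real)"
  shows "eventually (\<lambda>K. 0 < 9*a^4 - 4*c*a^3 + 4*K*a^2) at_top"
  using assms by real_asymp
lemma asym2: assumes "0 < (a::real)"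
  shows "eventually (\<lambda>K. 0 < (3 - 3*a^2 + sqrt (9*a^4 - 4*c*a^3 + 4*K*a^2)) / 2) at_top"
  using assms by real_asymp
lemma asym3: assumes "0 < (a::real)"
  shows "eventually (\<lambda>K. 0 < sqrt (K*a^2 - c*a + 9/4)) at_top"
  using assms by real_asymp
lemma asym4: assumes "0 < (a::real)"
  shows "((\<lambda>K. 16*a / sqrt (sqrt (9*a^4 - 4*c*a^3 + 4*K*a^2) * sqrt (K*a^2 - c*a + 9/4))) \<longlongrightarrow> 0) at_top"
  using assms by real_asymp

theorem mainTheorem6:
  fixes a :: real
  assumes "1 \<le> a" and "a \<le> sqrt 3"
  shows "((\<lambda>K. Tper K a) \<longlongrightarrow> 0) at_top"
proof -
  have a: "0 < a" using assms by simp
  define h where "h = (\<lambda>K. 16*a / sqrt (sqrt (9*a^4 - 4*cpar a*a^3 + 4*K*a^2) * sqrt (K*a^2 - cpar a*a + 9/4)))"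
  have ev: "eventually (\<lambda>K. 0 \<le> Tper K a \<and> Tper K a \<le> h K) at_top"
    using asym1[OF a, of "cpar a"] asym2[OF a, of "cpar a"] asym3[OF a, of "cpar a"]
  proof eventually_elim
    case (elim K)
    have BA: "beta K a < alpha K a" using elim(1) by (simp add: alpha_def beta_def)
    have A0: "0 < alpha K a" using elim(2) by (simp add: alpha_def)
    have G0: "0 < gamma K a" using elim(3) by (simp add: gamma_def)
    have diff: "alpha K a - beta K a = sqrt (9*a^4 - 4*cpar a*a^3 + 4*K*a^2)"
      by (simp add: alpha_def beta_def field_simps)
    note ib = int_bound[OF a BA A0 G0]
    show ?case
      using ib unfolding Tper_def h_def diff[symmetric]
      by (simp add: gamma_def real_sqrt_mult)
  qed
  show ?thesis
  proof (rule tendsto_sandwich[of "\<lambda>_. 0" _ _ h])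
    show "eventually (\<lambda>K. 0 \<le> Tper K a) at_top" using ev by (auto elim: eventually_mono)
    show "eventually (\<lambda>K. Tper K a \<le> h K) at_top" using ev by (auto elim: eventually_mono)
    show "((\<lambda>_. 0::real) \<longlongrightarrow> 0) at_top" by simp
    show "(h \<longlongrightarrow> 0) at_top" unfolding h_def by (rule asym4[OF a])
  qed
qed

end
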